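(* Let $N \geq \Delta \geq 2$ be integers. If $F$ is an acyclic graph with no isolated vertices, with $e(F)=N$, $\Delta(F)=\Delta$ and $e(L(F)) = g(N,\Delta)$, then $F$ is a tree.
   Context: All graphs are finite and simple; $L(F)$ is the line graph of $F$, $e(\cdot)$ the number of edges, $\Delta(\cdot)$ the maximum degree, $\delta(\cdot)$ the minimum degree. For integers $N \ge \Delta \ge 1$, $g(N,\Delta) = \max\{ e(L(F)) : F \text{ acyclic}, e(F)=N, \Delta(F)=\Delta, \delta(F)\geq 1\}$. *)

theory Defs
  imports Main
begin

definition simple_graph :: "'a set \<Rightarrow> 'a set set \<Rightarrow> bool" where
  "simple_graph V E \<longleftrightarrow> finite V \<and> (\<forall>e\<in>E. e \<subseteq> V \<and> card e = 2)"

definition degree :: "'a set set \<Rightarrow> 'a \<Rightarrow> nat" where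
  "degree E v = card {e\<in>E. v \<in> e}"

definition max_degree :: "'a set \<Rightarrow> 'a set set \<Rightarrow> nat" where
  "max_degree V E = Max (degree E ` V)"

definition no_isolated :: "'a set \<Rightarrow> 'a set set \<Rightarrow> bool" where
  "no_isolated V E \<longleftrightarrow> (\<forall>v\<in>V. degree E v \<ge> 1)"

definition is_cycle :: "'a set set \<Rightarrow> 'a list \<Rightarrow> bool" where
  "is_cycle E vs \<longleftrightarrow> length vs \<ge> 3 \<and> distinct vs \<and>
     (\<forall>i < length vs. {vs ! i, vs ! ((i + 1) mod length vs)} \<in> E)"

definition acyclic_graph :: "'a set \<Rightarrow> 'a set set \<Rightarrow> bool" where
  "acyclic_graph V E \<longleftrightarrow> \<not> (\<exists>vs. set vs \<subseteq> V \<and> is_cycle E vs)"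

definition connected_graph :: "'a set \<Rightarrow> 'a set set \<Rightarrow> bool" where
  "connected_graph V E \<longleftrightarrow> V \<noteq> {} \<and>
     (\<forall>u\<in>V. \<forall>v\<in>V. (u, v) \<in> {(x, y). {x, y} \<in> E}\<^sup>*)"

definition is_tree :: "'a set \<Rightarrow> 'a set set \<Rightarrow> bool" where
  "is_tree V E \<longleftrightarrow> connected_graph V E \<and> acyclic_graph V E"

definition line_graph_edges :: "'a set set \<Rightarrow> 'a set set set" where
  "line_graph_edges E = {{e, f} | e f. e \<in> E \<and> f \<in> E \<and> e \<noteq> f \<and> e \<inter> f \<noteq> {}}"

text \<open>g(N, Delta); vertex sets taken inside nat (every finite graph is isomorphic
  to one on nat).\<close>
definition g :: "nat \<Rightarrow> nat \<Rightarrow> nat" where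
  "g N \<Delta> = Max {card (line_graph_edges E) | (V :: nat set) E.
      simple_graph V E \<and> acyclic_graph V E \<and> no_isolated V E \<and>
      card E = N \<and> max_degree V E = \<Delta>}"

end

theory Submission
  imports Defs
begin


lemma chain_eq:
  assumes "\<And>i. a \<le> i \<Longrightarrow> i < b \<Longrightarrow> P (f i) = P (f (Suc i))" and "a \<le> b"
  shows "P (f b) = P (f a)"
  using assms
proof (induction b)
  case 0 then show ?case by simp
next
  case (Suc b)
  show ?case
  proof (cases "a = Suc b")
    case True then show ?thesis by simp
  next
    case False
    then have "a \<le> b" using Suc.prems by simp
    then have "P (f b) = P (f a)" using Suc by simp
    moreover have "P (f b) = P (f (Suc b))" using Suc.prems \<open>a \<le> b\<close> by simp
    ultimately show ?thesis by simp
  qed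
qed

lemma cyc_pred:
  assumes n: "n = length vs" and k: "k < n"
    and H: "\<And>i. i < n \<Longrightarrow> i \<noteq> k \<Longrightarrow> P (vs!i) = P (vs!((i+1) mod n))"
  shows "P (vs!k) = P (vs!((k+1) mod n))"
proof (cases "k = n - 1")
  case True
  have "P ((!) vs (n-1)) = P ((!) vs 0)"
  proof (rule chain_eq)
    fix i assume "0 \<le> i" "i < n - 1"
    then show "P (vs ! i) = P (vs ! Suc i)" using H[of i] True by simp
  qed simp
  moreover have "(k+1) mod n = 0" using True k by simp
  ultimately show ?thesis using True by simp
next
  case False
  have h1: "P ((!) vs (n-1)) = P ((!) vs (k+1))"
  proof (rule chain_eq)
    fix i assume "k+1 \<le> i" "i < n - 1"
    then show "P (vs ! i) = P (vs ! Suc i)" using H[of i] by simp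
  qed (use False k in simp)
  have h2: "P ((!) vs k) = P ((!) vs 0)"
  proof (rule chain_eq)
    fix i assume "0 \<le> i" "i < k"
    then show "P (vs ! i) = P (vs ! Suc i)" using H[of i] k by simp
  qed simp
  have h3: "P (vs!(n-1)) = P (vs!0)" using H[of "n-1"] False k by simp
  have "(k+1) mod n = k+1" using False k by simp
  then show ?thesis using h1 h2 h3 by simp
qed



definition rel :: "'a set set \<Rightarrow> ('a \<times> 'a) set" where
  "rel E = {(x, y). {x, y} \<in> E}"

definition gpath :: "'a set set \<Rightarrow> 'a list \<Rightarrow> bool" where
  "gpath E xs \<longleftrightarrow> distinct xs \<and> (\<forall>i. Suc i < length xs \<longrightarrow> {xs!i, xs!Suc i} \<in> E)"

lemma rel_sym: "(a, b) \<in> (rel E)\<^sup>* \<Longrightarrow> (b, a) \<in> (rel E)\<^sup>*"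
proof -
  have "sym (rel E)" unfolding rel_def sym_def by (simp add: insert_commute)
  then have "sym ((rel E)\<^sup>*)" by (rule sym_rtrancl)
  then show "(a, b) \<in> (rel E)\<^sup>* \<Longrightarrow> (b, a) \<in> (rel E)\<^sup>*" by (meson symD)
qed

lemma path_reach: "gpath E xs \<Longrightarrow> i < length xs \<Longrightarrow> (xs!0, xs!i) \<in> (rel E)\<^sup>*"
proof (induction i)
  case 0 then show ?case by simp
next
  case (Suc i)
  then have "(xs!0, xs!i) \<in> (rel E)\<^sup>*" by simp
  moreover have "(xs!i, xs!Suc i) \<in> rel E" using Suc.prems unfolding gpath_def rel_def by simp
  ultimately show ?case by (rule rtrancl_into_rtrancl)
qed

lemma leaf_exists:
  assumes sg: "simple_graph V E" and ac: "acyclic_graph V E" and ni: "no_isolated V E" and p: "p \<in> V"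
  shows "\<exists>t\<in>V. degree E t = 1 \<and> (p, t) \<in> (rel E)\<^sup>*"
proof -
  define S where "S = {xs. gpath E xs \<and> set xs \<subseteq> V \<and> xs \<noteq> [] \<and> hd xs = p}"
  have fV: "finite V" using sg unfolding simple_graph_def by simp
  have EV: "E \<subseteq> Pow V" using sg unfolding simple_graph_def by auto
  have fE: "finite E" using EV fV by (meson finite_Pow_iff finite_subset)
  have "S \<subseteq> {xs. set xs \<subseteq> V \<and> length xs \<le> card V}"
  proof
    fix xs assume "xs \<in> S"
    then have "distinct xs" "set xs \<subseteq> V" unfolding S_def gpath_def by auto
    then show "xs \<in> {xs. set xs \<subseteq> V \<and> length xs \<le> card V}"
      using fV by (metis card_mono distinct_card mem_Collect_eq)
  qed
  then have fS: "finite S" using finite_lists_length_le[OF fV] finite_subset by blast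
  have "[p] \<in> S" unfolding S_def gpath_def using p by simp
  then have neS: "S \<noteq> {}" by auto
  define m where "m = Max (length ` S)"
  have "m \<in> length ` S" unfolding m_def using fS neS by simp
  then obtain xs where xs: "xs \<in> S" and lxs: "length xs = m" by auto
  have mx: "\<And>ys. ys \<in> S \<Longrightarrow> length ys \<le> length xs" unfolding lxs m_def using fS by simp
  have xsp: "gpath E xs" "set xs \<subseteq> V" "xs \<noteq> []" "hd xs = p" using xs unfolding S_def by auto
  define n where "n = length xs"
  have n1: "n \<ge> 1" using xsp(3) n_def by (cases xs) auto
  define t where "t = xs!(n-1)"
  have tV: "t \<in> V" using xsp(2) n1 unfolding t_def n_def by auto
  have reach: "(p, t) \<in> (rel E)\<^sup>*"
    using path_reach[OF xsp(1), of "n-1"] n1 xsp(3,4) unfolding t_def n_def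
    by (simp add: hd_conv_nth)
  have d1: "degree E t \<ge> 1" using ni tV unfolding no_isolated_def by auto
  have "degree E t \<le> 1"
  proof (rule ccontr)
    assume "\<not> degree E t \<le> 1"
    then have d2: "card {e\<in>E. t \<in> e} \<ge> 2" unfolding degree_def by simp
    define c where "c = (if n \<ge> 2 then {xs!(n-2), t} else {})"
    have "card ({e\<in>E. t \<in> e} - {c}) \<ge> 1"
      using d2 by (metis (no_types, lifting) Suc_1 card_Diff_singleton_if diff_Suc_1 le_diff_conv2 nat_le_linear not_less_eq_eq one_le_numeral plus_1_eq_Suc)
    then have "{e\<in>E. t \<in> e} - {c} \<noteq> {}" by (metis card.empty not_one_le_zero)
    then obtain e where e: "e \<in> E" "t \<in> e" "e \<noteq> c" by blast
    have "card e = 2" using sg e unfolding simple_graph_def by auto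
    then obtain y where y: "y \<noteq> t" "e = {t, y}" using e(2) unfolding card_2_iff by (metis empty_iff insert_commute insert_iff)
    have yV: "y \<in> V" using sg e y unfolding simple_graph_def by auto
    show False
    proof (cases "y \<in> set xs")
      case False
      have "xs @ [y] \<in> S"
        unfolding S_def gpath_def
      proof (intro CollectI conjI allI impI)
        show "distinct (xs @ [y])" using False xsp(1) unfolding gpath_def by simp
        fix i assume i: "Suc i < length (xs @ [y])"
        show "{(xs @ [y]) ! i, (xs @ [y]) ! Suc i} \<in> E"
        proof (cases "Suc i < n")
          case True then show ?thesis using xsp(1) unfolding gpath_def n_def by (simp add: nth_append)
        next
          case False
          then have "i = n - 1" using i n_def by simp
          then have "(xs @ [y]) ! i = t" "(xs @ [y]) ! Suc i = y"
            using n1 unfolding t_def n_def by (auto simp: nth_append)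
          then show ?thesis using e y by simp
        qed
      qed (use xsp yV in auto)
      then show False using mx by fastforce
    next
      case True
      then obtain j where j: "j < n" "xs!j = y" unfolding n_def by (auto simp: in_set_conv_nth)
      have "j \<noteq> n - 1" using j y unfolding t_def by auto
      moreover have "j \<noteq> n - 2"
      proof
        assume "j = n - 2"
        then have "n \<ge> 2" using j \<open>j \<noteq> n - 1\<close> by linarith
        then have "c = {y, t}" unfolding c_def using \<open>j = n - 2\<close> j by simp
        then show False using e y by (simp add: insert_commute)
      qed
      ultimately have j3: "j + 3 \<le> n" using j by linarith
      define vs where "vs = drop j xs"
      have lvs: "length vs = n - j" unfolding vs_def n_def by simp
      have "is_cycle E vs"
        unfolding is_cycle_def
      proof (intro conjI allI impI)
        show "3 \<le> length vs" using lvs j3 by simp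
        show "distinct vs" using xsp(1) unfolding vs_def gpath_def by simp
        fix i assume i: "i < length vs"
        show "{vs ! i, vs ! ((i + 1) mod length vs)} \<in> E"
        proof (cases "i + 1 < length vs")
          case True
          then have "(i+1) mod length vs = Suc i" by simp
          moreover have "Suc (j+i) < length xs" using True lvs n_def by simp
          ultimately show ?thesis using xsp(1) unfolding gpath_def vs_def
            by (simp add: add.commute)
        next
          case False
          then have "i = n - j - 1" using i lvs by simp
          then have "i + 1 = length vs" using lvs j3 by simp
          then have "(i + 1) mod length vs = 0" by simp
          moreover have "vs ! i = t" "vs ! 0 = y"
            using lvs j j3 \<open>i = n - j - 1\<close> unfolding vs_def t_def n_def by auto
          ultimately show ?thesis using e y by simp
        qed
      qed
      moreover have "set vs \<subseteq> V" using xsp(2) unfolding vs_def by (meson order.trans set_drop_subset)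
      ultimately show False using ac unfolding acyclic_graph_def by blast
    qed
  qed
  then have "degree E t = 1" using d1 by simp
  then show ?thesis using tV reach by blast
qed



lemma to_nat:
  fixes V :: "'a set" and E :: "'a set set"
  assumes sg: "simple_graph V E" and ac: "acyclic_graph V E" and ni: "no_isolated V E"
  shows "\<exists>(V'::nat set) E'. simple_graph V' E' \<and> acyclic_graph V' E' \<and> no_isolated V' E' \<and>
     card E' = card E \<and> max_degree V' E' = max_degree V E \<and>
     card (line_graph_edges E') = card (line_graph_edges E)"
proof -
  have fV: "finite V" using sg unfolding simple_graph_def by simp
  have EV: "E \<subseteq> Pow V" using sg unfolding simple_graph_def by auto
  obtain f :: "'a \<Rightarrow> nat" where inj: "inj_on f V" using finite_imp_inj_to_nat_seg[OF fV] by blast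
  define F where "F = image f"
  have injF: "inj_on F E" unfolding F_def using inj_on_image_Pow[OF inj] EV inj_on_subset by blast
  define E' where "E' = F ` E"
  define V' where "V' = f ` V"
  have sg': "simple_graph V' E'"
    unfolding simple_graph_def
  proof (intro conjI ballI)
    show "finite V'" using fV V'_def by simp
    fix e' assume "e' \<in> E'"
    then obtain e where e: "e \<in> E" "e' = f ` e" unfolding E'_def F_def by auto
    have "e \<subseteq> V" "card e = 2" using e sg unfolding simple_graph_def by auto
    then show "e' \<subseteq> V'" "card e' = 2" unfolding e V'_def
      using card_image inj inj_on_subset by (blast, metis)
  qed
  have deg: "degree E' (f v) = degree E v" if v: "v \<in> V" for v
  proof -
    have "{e'\<in>E'. f v \<in> e'} = F ` {e\<in>E. v \<in> e}"
    proof (rule set_eqI, rule iffI)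
      fix e' assume "e' \<in> {e'\<in>E'. f v \<in> e'}"
      then obtain e where e: "e \<in> E" "e' = f ` e" "f v \<in> f ` e" unfolding E'_def F_def by auto
      then have "v \<in> e" using inj v EV by (meson PowD inj_on_image_mem_iff subsetD)
      then show "e' \<in> F ` {e\<in>E. v \<in> e}" using e unfolding F_def by auto
    next
      fix e' assume "e' \<in> F ` {e\<in>E. v \<in> e}"
      then show "e' \<in> {e'\<in>E'. f v \<in> e'}" unfolding E'_def F_def by auto
    qed
    moreover have "inj_on F {e\<in>E. v \<in> e}" using injF inj_on_subset by fastforce
    ultimately show ?thesis unfolding degree_def by (simp add: card_image)
  qed
  have degs: "degree E' ` V' = degree E ` V"
    unfolding V'_def image_image using deg by (simp cong: image_cong)
  have ni': "no_isolated V' E'" using ni deg unfolding no_isolated_def V'_def by auto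
  have md: "max_degree V' E' = max_degree V E" unfolding max_degree_def degs ..
  have cE: "card E' = card E" unfolding E'_def using injF by (simp add: card_image)
  have ac': "acyclic_graph V' E'"
    unfolding acyclic_graph_def
  proof
    assume "\<exists>vs. set vs \<subseteq> V' \<and> is_cycle E' vs"
    then obtain vs where vs: "set vs \<subseteq> V'" "is_cycle E' vs" by blast
    define h where "h = inv_into V f"
    define ws where "ws = map h vs"
    have hV: "\<And>a. a \<in> V' \<Longrightarrow> h a \<in> V" unfolding h_def V'_def by (simp add: inv_into_into)
    have "is_cycle E ws"
      unfolding is_cycle_def
    proof (intro conjI allI impI)
      show "3 \<le> length ws" using vs unfolding ws_def is_cycle_def by simp
      have "inj_on h V'" unfolding h_def V'_def by (simp add: inj_on_inv_into)
      then show "distinct ws" using vs unfolding ws_def is_cycle_def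
        by (simp add: distinct_map inj_on_subset)
      fix i assume i: "i < length ws"
      let ?j = "(i + 1) mod length ws"
      have j: "?j < length vs" using i unfolding ws_def by (metis length_map less_nat_zero_code mod_less_divisor neq0_conv)
      have "{vs ! i, vs ! ?j} \<in> E'" using vs i unfolding is_cycle_def ws_def by simp
      then obtain e where e: "e \<in> E" "{vs ! i, vs ! ?j} = f ` e" unfolding E'_def F_def by auto
      have "h ` f ` e = e" unfolding h_def using inj e EV by (meson PowD inv_into_image_cancel subsetD)
      then have "h ` {vs ! i, vs ! ?j} = e" using e by simp
      then show "{ws ! i, ws ! ?j} \<in> E" using e i j unfolding ws_def by simp
    qed
    moreover have "set ws \<subseteq> V" using vs hV unfolding ws_def by auto
    ultimately show False using ac unfolding acyclic_graph_def by blast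
  qed
  define G where "G = image F"
  have line: "line_graph_edges E' = G ` line_graph_edges E"
  proof (rule set_eqI, rule iffI)
    fix p assume "p \<in> line_graph_edges E'"
    then obtain a b where ab: "p = {a, b}" "a \<in> E'" "b \<in> E'" "a \<noteq> b" "a \<inter> b \<noteq> {}"
      unfolding line_graph_edges_def by blast
    then obtain ea eb where eab: "ea \<in> E" "eb \<in> E" "a = F ea" "b = F eb" unfolding E'_def by auto
    have "ea \<noteq> eb" using ab eab by auto
    moreover have "ea \<inter> eb \<noteq> {}"
    proof -
      have "ea \<subseteq> V" "eb \<subseteq> V" using eab EV by auto
      then have "f ` (ea \<inter> eb) = f ` ea \<inter> f ` eb" using inj by (simp add: inj_on_image_Int)
      then show ?thesis using ab eab unfolding F_def by auto
    qed
    ultimately have "{ea, eb} \<in> line_graph_edges E" using eab unfolding line_graph_edges_def by blast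
    moreover have "p = G {ea, eb}" unfolding G_def using ab eab by simp
    ultimately show "p \<in> G ` line_graph_edges E" by blast
  next
    fix p assume "p \<in> G ` line_graph_edges E"
    then obtain a b where ab: "p = G {a, b}" "a \<in> E" "b \<in> E" "a \<noteq> b" "a \<inter> b \<noteq> {}"
      unfolding line_graph_edges_def by blast
    have "F a \<noteq> F b" using ab injF by (meson inj_on_contraD)
    moreover have "F a \<inter> F b \<noteq> {}" using ab unfolding F_def by auto
    moreover have "F a \<in> E'" "F b \<in> E'" using ab unfolding E'_def by auto
    ultimately show "p \<in> line_graph_edges E'" using ab unfolding G_def line_graph_edges_def by auto
  qed
  have "line_graph_edges E \<subseteq> Pow E" unfolding line_graph_edges_def by auto
  then have "inj_on G (line_graph_edges E)" unfolding G_def using inj_on_image_Pow[OF injF] inj_on_subset by blast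
  then have "card (line_graph_edges E') = card (line_graph_edges E)" unfolding line by (simp add: card_image)
  then show ?thesis using sg' ac' ni' cE md by blast
qed



lemma mod_succ: "k < (n::nat) \<Longrightarrow> (k+1) mod n = (if k+1 = n then 0 else k+1)"
  by (cases "k + 1 = n") simp_all

lemma mod_two_cycle:
  assumes a: "3 \<le> (n::nat)" "i < n" "k < n" "i = (k+1) mod n" "k = (i+1) mod n"
  shows False
proof (cases "k + 1 = n")
  case True
  have "(k+1) mod n = 0" using True by simp
  then have i0: "i = 0" using a(4) by linarith
  have "(i+1) mod n = 1" using i0 a(1) by simp
  then have "k = 1" using a(5) by linarith
  then show False using True a(1) by simp
next
  case False
  have "(k+1) mod n = k + 1" using False a(3) by simp
  then have ik: "i = k + 1" using a(4) by linarith
  have "(i+1) mod n = (if i + 1 = n then 0 else i + 1)" using mod_succ[OF a(2)] .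
  then have "k = (if i + 1 = n then 0 else i + 1)" using a(5) by linarith
  then show False using ik a(1) by (auto split: if_splits)
qed

lemma card2_other:
  assumes "card e = 2" "t \<in> e"
  shows "\<exists>y. y \<noteq> t \<and> e = {t, y}"
proof -
  obtain a b where ab: "e = {a, b}" "a \<noteq> b" using assms(1) unfolding card_2_iff by blast
  show ?thesis
  proof (cases "t = a")
    case True then show ?thesis using ab by (intro exI[of _ b]) simp
  next
    case False then have "t = b" using ab assms(2) by blast
    then show ?thesis using ab by (intro exI[of _ a]) (simp add: insert_commute)
  qed
qed

theorem mainTheorem6:
  fixes N \<Delta> :: nat and V :: "'a set" and E :: "'a set set"
  assumes "N \<ge> \<Delta>" and "\<Delta> \<ge> 2"
    and "simple_graph V E" and "acyclic_graph V E" and "no_isolated V E"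
    and "card E = N" and "max_degree V E = \<Delta>"
    and "card (line_graph_edges E) = g N \<Delta>"
  shows "is_tree V E"
proof (rule ccontr)
  assume nt: "\<not> is_tree V E"
  note sg = assms(3) and ac = assms(4) and ni = assms(5)
  have fV: "finite V" using sg unfolding simple_graph_def by simp
  have EV: "E \<subseteq> Pow V" using sg unfolding simple_graph_def by auto
  have fE: "finite E" using EV fV by (meson finite_Pow_iff finite_subset)
  have e2: "\<And>e. e \<in> E \<Longrightarrow> card e = 2" using sg unfolding simple_graph_def by auto
  have "E \<noteq> {}" using assms(1,2,6) by auto
  then obtain e0 where "e0 \<in> E" by auto
  then have "e0 \<noteq> {}" using e2 by fastforce
  then have "V \<noteq> {}" using \<open>e0 \<in> E\<close> EV by auto
  then have "\<not> (\<forall>u\<in>V. \<forall>v\<in>V. (u, v) \<in> (rel E)\<^sup>*)"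
    using nt ac unfolding is_tree_def connected_graph_def rel_def by blast
  then obtain p q where pq: "p \<in> V" "q \<in> V" "(p, q) \<notin> (rel E)\<^sup>*" by blast
  obtain u where u: "u \<in> V" "degree E u = 1" "(p, u) \<in> (rel E)\<^sup>*" using leaf_exists[OF sg ac ni pq(1)] by blast
  obtain w where w: "w \<in> V" "degree E w = 1" "(q, w) \<in> (rel E)\<^sup>*" using leaf_exists[OF sg ac ni pq(2)] by blast
  have uw: "(u, w) \<notin> (rel E)\<^sup>*"
  proof
    assume "(u, w) \<in> (rel E)\<^sup>*"
    then have "(p, w) \<in> (rel E)\<^sup>*" using u(3) by simp
    then have "(p, q) \<in> (rel E)\<^sup>*" using rel_sym[OF w(3)] by (rule rtrancl_trans)
    then show False using pq by simp
  qed
  have "card {e\<in>E. w \<in> e} = 1" using w(2) unfolding degree_def .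
  then obtain ew where ew: "{e\<in>E. w \<in> e} = {ew}" by (rule card_1_singletonE)
  have "card {e\<in>E. u \<in> e} = 1" using u(2) unfolding degree_def .
  then obtain eu where eu: "{e\<in>E. u \<in> e} = {eu}" by (rule card_1_singletonE)
  have "ew \<in> {e\<in>E. w \<in> e}" using ew by simp
  then have ewE: "ew \<in> E" "w \<in> ew" by simp_all
  have "eu \<in> {e\<in>E. u \<in> e}" using eu by simp
  then have euE: "eu \<in> E" "u \<in> eu" by simp_all
  have wE: "e = ew" if "e \<in> E" "w \<in> e" for e
  proof -
    have "e \<in> {e\<in>E. w \<in> e}" using that by simp
    then show ?thesis unfolding ew by simp
  qed
  have uE: "e = eu" if "e \<in> E" "u \<in> e" for e
  proof -
    have "e \<in> {e\<in>E. u \<in> e}" using that by simp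
    then show ?thesis unfolding eu by simp
  qed
  obtain x where x: "x \<noteq> w" "ew = {w, x}" using card2_other[OF e2[OF ewE(1)] ewE(2)] by blast
  obtain u' where u': "u' \<noteq> u" "eu = {u, u'}" using card2_other[OF e2[OF euE(1)] euE(2)] by blast
  have wx: "(w, x) \<in> rel E" using ewE x unfolding rel_def by simp
  have ux: "(u, x) \<notin> (rel E)\<^sup>*"
  proof
    assume "(u, x) \<in> (rel E)\<^sup>*"
    moreover have "(x, w) \<in> (rel E)\<^sup>*" using rel_sym[OF r_into_rtrancl[OF wx]] .
    ultimately have "(u, w) \<in> (rel E)\<^sup>*" by (rule rtrancl_trans)
    then show False using uw by simp
  qed
  have xu: "x \<noteq> u"
  proof
    assume "x = u" then have "(u, x) \<in> (rel E)\<^sup>*" by simp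
    then show False using ux by simp
  qed
  have uw2: "u \<noteq> w"
  proof
    assume "u = w" then have "(u, w) \<in> (rel E)\<^sup>*" by simp
    then show False using uw by simp
  qed
  have uxE: "{u, x} \<notin> E"
  proof
    assume "{u, x} \<in> E" then have "(u, x) \<in> rel E" unfolding rel_def by simp
    then have "(u, x) \<in> (rel E)\<^sup>*" by (rule r_into_rtrancl)
    then show False using ux by simp
  qed
  have xV: "x \<in> V" using ewE x EV by auto
  have u'x: "u' \<noteq> x"
  proof
    assume "u' = x" then have "(u, x) \<in> rel E" using euE u' unfolding rel_def by simp
    then show False using ux by auto
  qed
  have ueu: "u \<notin> ew" using x xu uw2 by auto
  have euew: "eu \<noteq> ew" using ueu euE by auto
  define \<sigma> where "\<sigma> e = (if e = ew then {u, x} else e)" for e :: "'a set"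
  define E' where "E' = \<sigma> ` E"
  define V' where "V' = V - {w}"
  have E'alt: "E' = insert {u, x} (E - {ew})"
  proof -
    have "E = insert ew (E - {ew})" using ewE by blast
    then have "E' = insert (\<sigma> ew) (\<sigma> ` (E - {ew}))" unfolding E'_def by (metis image_insert)
    moreover have "\<sigma> ` (E - {ew}) = E - {ew}"
    proof -
      have "\<And>e. e \<in> E - {ew} \<Longrightarrow> \<sigma> e = id e" unfolding \<sigma>_def by simp
      then have "\<sigma> ` (E - {ew}) = id ` (E - {ew})" by (rule image_cong[OF refl])
      then show ?thesis by simp
    qed
    moreover have "\<sigma> ew = {u, x}" unfolding \<sigma>_def by simp
    ultimately show ?thesis by simp
  qed
  have inj\<sigma>: "inj_on \<sigma> E"
  proof (rule inj_onI)
    fix a b assume ab: "a \<in> E" "b \<in> E" "\<sigma> a = \<sigma> b"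
    show "a = b"
    proof (cases "a = ew")
      case True
      show ?thesis
      proof (rule ccontr)
        assume "a \<noteq> b"
        then have "\<sigma> b = b" using True unfolding \<sigma>_def by simp
        then have "b = {u, x}" using ab True unfolding \<sigma>_def by simp
        then show False using ab uxE by simp
      qed
    next
      case False
      then have sa: "\<sigma> a = a" unfolding \<sigma>_def by simp
      show ?thesis
      proof (cases "b = ew")
        case True
        then have "a = {u, x}" using ab sa unfolding \<sigma>_def by simp
        then show ?thesis using ab uxE by simp
      next
        case False
        then show ?thesis using ab sa unfolding \<sigma>_def by simp
      qed
    qed
  qed
  have cE': "card E' = N" unfolding E'_def using inj\<sigma> assms(6) by (simp add: card_image)
  have edge': "e \<subseteq> V' \<and> card e = 2" if eE': "e \<in> E'" for e
  proof -
    consider "e = {u, x}" | "e \<in> E" "e \<noteq> ew" using eE' unfolding E'alt by blast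
    then show ?thesis
    proof cases
      case 1 then show ?thesis using u(1) xV x uw2 xu unfolding V'_def by auto
    next
      case 2
      then have "w \<notin> e" using wE by blast
      then show ?thesis using 2 EV e2 unfolding V'_def by auto
    qed
  qed
  have sg': "simple_graph V' E'"
    unfolding simple_graph_def using edge' fV V'_def by simp
  have degu: "degree E' u = 2"
  proof -
    have "{e\<in>E'. u \<in> e} = {{u, x}, eu}"
    proof (rule set_eqI, rule iffI)
      fix e assume a: "e \<in> {e\<in>E'. u \<in> e}"
      show "e \<in> {{u, x}, eu}"
      proof (cases "e = {u, x}")
        case False
        then have "e \<in> E" using a unfolding E'alt by blast
        then have "e = eu" using uE a by blast
        then show ?thesis by simp
      qed simp
    next
      fix e assume "e \<in> {{u, x}, eu}"
      moreover have "eu \<in> E'" unfolding E'alt using euE euew by blast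
      moreover have "{u, x} \<in> E'" unfolding E'alt by blast
      ultimately show "e \<in> {e\<in>E'. u \<in> e}" using euE by blast
    qed
    moreover have "{u, x} \<noteq> eu" using uxE euE by metis
    ultimately show ?thesis unfolding degree_def by simp
  qed
  have dego: "degree E' v = degree E v" if v: "v \<noteq> u" "v \<noteq> w" for v
  proof -
    have mem: "(v \<in> \<sigma> e) = (v \<in> e)" if "e \<in> E" for e
    proof (cases "e = ew")
      case True then show ?thesis unfolding \<sigma>_def using v x by simp
    next
      case False then show ?thesis unfolding \<sigma>_def by simp
    qed
    have "{e\<in>E'. v \<in> e} = \<sigma> ` {e\<in>E. v \<in> \<sigma> e}" unfolding E'_def by blast
    also have "{e\<in>E. v \<in> \<sigma> e} = {e\<in>E. v \<in> e}" using mem by blast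
    finally have "{e\<in>E'. v \<in> e} = \<sigma> ` {e\<in>E. v \<in> e}" .
    moreover have "inj_on \<sigma> {e\<in>E. v \<in> e}" by (rule inj_on_subset[OF inj\<sigma>]) blast
    ultimately show ?thesis unfolding degree_def by (simp add: card_image)
  qed
  have ni': "no_isolated V' E'"
    unfolding no_isolated_def
  proof
    fix v assume vV: "v \<in> V'"
    show "1 \<le> degree E' v"
    proof (cases "v = u")
      case True then show ?thesis using degu by simp
    next
      case False
      have "v \<noteq> w" "v \<in> V" using vV unfolding V'_def by auto
      then have "1 \<le> degree E v" using ni unfolding no_isolated_def by blast
      then show ?thesis using dego[OF False \<open>v \<noteq> w\<close>] by simp
    qed
  qed
  have md': "max_degree V' E' = \<Delta>"
  proof -
    have fd: "finite (degree E ` V)" using fV by simp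
    have "\<Delta> \<in> degree E ` V" using assms(7) fd \<open>V \<noteq> {}\<close> unfolding max_degree_def by (metis Max_in empty_is_image)
    then obtain v0 where v0: "v0 \<in> V" "degree E v0 = \<Delta>" by blast
    have le: "degree E v \<le> \<Delta>" if "v \<in> V" for v
      using assms(7) fd that unfolding max_degree_def by (metis Max_ge imageI)
    have "v0 \<noteq> w" "v0 \<noteq> u" using v0 w(2) u(2) assms(2) by auto
    then have "degree E' v0 = \<Delta>" "v0 \<in> V'" using v0 dego unfolding V'_def by auto
    then have "\<Delta> \<in> degree E' ` V'" by (metis image_eqI)
    moreover have "y \<le> \<Delta>" if yin: "y \<in> degree E' ` V'" for y
    proof -
      obtain v where vv: "v \<in> V'" "y = degree E' v" using yin by blast
      show "y \<le> \<Delta>"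
      proof (cases "v = u")
        case True then show ?thesis using vv degu assms(2) by simp
      next
        case False
        have "v \<noteq> w" "v \<in> V" using vv unfolding V'_def by auto
        then show ?thesis using vv le dego[OF False] by simp
      qed
    qed
    moreover have "finite (degree E' ` V')" using fV V'_def by simp
    ultimately show ?thesis unfolding max_degree_def by (meson Max_eqI)
  qed
  have inE: "e \<in> E" if "e \<in> E'" "e \<noteq> {u, x}" for e using that unfolding E'alt by auto
  have ac': "acyclic_graph V' E'"
    unfolding acyclic_graph_def
  proof
    assume "\<exists>vs. set vs \<subseteq> V' \<and> is_cycle E' vs"
    then obtain vs where vs: "set vs \<subseteq> V'" "is_cycle E' vs" by blast
    define n where "n = length vs"
    have n3: "n \<ge> 3" and dv: "distinct vs" using vs unfolding is_cycle_def n_def by auto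
    have Q: "\<And>i. i < n \<Longrightarrow> {vs!i, vs!((i+1) mod n)} \<in> E'" using vs unfolding is_cycle_def n_def by auto
    have "\<exists>k<n. {vs!k, vs!((k+1) mod n)} = {u, x}"
    proof (rule ccontr)
      assume "\<not> ?thesis"
      then have "is_cycle E vs" using Q inE n3 dv unfolding is_cycle_def n_def by auto
      moreover have "set vs \<subseteq> V" using vs V'_def by auto
      ultimately show False using ac unfolding acyclic_graph_def by blast
    qed
    then obtain k where k: "k < n" "{vs!k, vs!((k+1) mod n)} = {u, x}" by blast
    have uniq: "{vs!i, vs!((i+1) mod n)} \<noteq> {u, x}" if i: "i < n" "i \<noteq> k" for i
    proof
      assume "{vs!i, vs!((i+1) mod n)} = {u, x}"
      then have eq: "{vs!i, vs!((i+1) mod n)} = {vs!k, vs!((k+1) mod n)}" using k by simp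
      have a: "(i+1) mod n < n" "(k+1) mod n < n" using n3 by auto
      from eq consider "vs!i = vs!k" | "vs!i = vs!((k+1) mod n)" "vs!((i+1) mod n) = vs!k"
        by (metis doubleton_eq_iff)
      then show False
      proof cases
        case 1 then show False using dv i k n_def by (simp add: nth_eq_iff_index_eq)
      next
        case 2
        then have "i = (k+1) mod n" "(i+1) mod n = k"
          using dv i k a n_def by (simp_all add: nth_eq_iff_index_eq)
        then show False using mod_two_cycle[OF n3 i(1) k(1)] by metis
      qed
    qed
    define P where "P z = ((u, z) \<in> (rel E)\<^sup>*)" for z
    have "P (vs!k) = P (vs!((k+1) mod n))"
    proof (rule cyc_pred[OF n_def k(1)])
      fix i assume i: "i < n" "i \<noteq> k"
      then have "{vs!i, vs!((i+1) mod n)} \<in> E" using uniq Q inE by blast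
      then have r: "(vs!i, vs!((i+1) mod n)) \<in> rel E" "(vs!((i+1) mod n), vs!i) \<in> rel E"
        unfolding rel_def by (auto simp: insert_commute)
      show "P (vs!i) = P (vs!((i+1) mod n))" unfolding P_def
        using rtrancl_into_rtrancl[OF _ r(1)] rtrancl_into_rtrancl[OF _ r(2)] by blast
    qed
    moreover have "P u" "\<not> P x" unfolding P_def using ux by auto
    ultimately show False using k(2) by (metis doubleton_eq_iff)
  qed
  have xin: "x \<in> c" if c: "c \<in> E" "c \<noteq> ew" "ew \<inter> c \<noteq> {}" for c
  proof -
    obtain z where z: "z \<in> ew" "z \<in> c" using c(3) by blast
    have "z \<noteq> w"
    proof
      assume "z = w" then have "c = ew" using wE[OF c(1)] z(2) by simp
      then show False using c(2) by simp
    qed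
    then have "z = x" using z(1) x(2) by simp
    then show ?thesis using z(2) by simp
  qed
  have lt: "card (line_graph_edges E) < card (line_graph_edges E')"
  proof -
    define G where "G = image \<sigma>"
    have sub: "G ` line_graph_edges E \<subseteq> line_graph_edges E'"
    proof
      fix p assume "p \<in> G ` line_graph_edges E"
      then obtain a b where ab: "p = G {a, b}" "a \<in> E" "b \<in> E" "a \<noteq> b" "a \<inter> b \<noteq> {}"
        unfolding line_graph_edges_def by blast
      have "\<sigma> a \<noteq> \<sigma> b" using ab inj\<sigma> by (meson inj_on_contraD)
      moreover have "\<sigma> a \<inter> \<sigma> b \<noteq> {}"
      proof (cases "a = ew")
        case True
        then have "b \<noteq> ew" using ab by simp
        then have "x \<in> b" "\<sigma> b = b" using xin[OF ab(3)] ab(5) True unfolding \<sigma>_def by simp_all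
        moreover have "\<sigma> a = {u, x}" using True unfolding \<sigma>_def by simp
        ultimately show ?thesis by blast
      next
        case False
        then have sa: "\<sigma> a = a" unfolding \<sigma>_def by simp
        show ?thesis
        proof (cases "b = ew")
          case True
          have "ew \<inter> a \<noteq> {}" using ab(5) True by (simp add: Int_commute)
          then have "x \<in> a" using xin[OF ab(2) False] by simp
          moreover have "\<sigma> b = {u, x}" using True unfolding \<sigma>_def by simp
          ultimately show ?thesis using sa by blast
        next
          case False
          then have "\<sigma> b = b" unfolding \<sigma>_def by simp
          then show ?thesis using sa ab(5) by simp
        qed
      qed
      moreover have "\<sigma> a \<in> E'" "\<sigma> b \<in> E'" using ab unfolding E'_def by auto
      moreover have "p = {\<sigma> a, \<sigma> b}" using ab(1) unfolding G_def by simp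
      ultimately show "p \<in> line_graph_edges E'" unfolding line_graph_edges_def by blast
    qed
    have new: "{{u, x}, eu} \<in> line_graph_edges E'"
    proof -
      have "{u, x} \<in> E'" "eu \<in> E'" unfolding E'alt using euE euew by blast+
      moreover have "{u, x} \<noteq> eu" using euE uxE by metis
      moreover have "u \<in> {u, x} \<inter> eu" using euE by simp
      ultimately show ?thesis unfolding line_graph_edges_def by blast
    qed
    have s: "c = ew" if "c \<in> E" "\<sigma> c = {u, x}" for c
    proof (rule ccontr)
      assume "c \<noteq> ew" then have "\<sigma> c = c" unfolding \<sigma>_def by simp
      then show False using that uxE by simp
    qed
    have s2: "c = eu" if "c \<in> E" "\<sigma> c = eu" for c
    proof (cases "c = ew")
      case True then have "\<sigma> c = {u, x}" unfolding \<sigma>_def by simp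
      then show ?thesis using that uxE euE by simp
    next
      case False then have "\<sigma> c = c" unfolding \<sigma>_def by simp
      then show ?thesis using that by simp
    qed
    have xeu: "x \<notin> eu" using u' u'x xu by simp
    have notin: "{{u, x}, eu} \<notin> G ` line_graph_edges E"
    proof
      assume "{{u, x}, eu} \<in> G ` line_graph_edges E"
      then obtain q where q: "q \<in> line_graph_edges E" "{{u, x}, eu} = G q" by blast
      then obtain a b where ab0: "q = {a, b}" "a \<in> E" "b \<in> E" "a \<noteq> b" "a \<inter> b \<noteq> {}"
        unfolding line_graph_edges_def by blast
      then have ab: "{{u, x}, eu} = {\<sigma> a, \<sigma> b}" "a \<in> E" "b \<in> E" "a \<noteq> b" "a \<inter> b \<noteq> {}"
        using q(2) unfolding G_def by simp_all
      from ab(1) consider "\<sigma> a = {u, x}" "\<sigma> b = eu" | "\<sigma> a = eu" "\<sigma> b = {u, x}"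
        by (metis doubleton_eq_iff)
      then have "ew \<inter> eu \<noteq> {}"
      proof cases
        case 1
        then have "a = ew" "b = eu" using s s2 ab(2,3) by blast+
        then show ?thesis using ab(5) by simp
      next
        case 2
        then have "b = ew" "a = eu" using s s2 ab(2,3) by blast+
        then show ?thesis using ab(5) by (simp add: Int_commute)
      qed
      then have "x \<in> eu" using xin[OF euE(1) euew] by simp
      then show False using xeu by simp
    qed
    have fin: "finite (line_graph_edges E')"
    proof -
      have "finite E'" using fE E'_def by simp
      moreover have "line_graph_edges E' \<subseteq> Pow E'" unfolding line_graph_edges_def by auto
      ultimately show ?thesis by (meson finite_Pow_iff finite_subset)
    qed
    have "line_graph_edges E \<subseteq> Pow E" unfolding line_graph_edges_def by auto
    then have "inj_on G (line_graph_edges E)" unfolding G_def by (rule inj_on_subset[OF inj_on_image_Pow[OF inj\<sigma>]])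
    then have "card (line_graph_edges E) = card (G ` line_graph_edges E)" by (simp add: card_image)
    also have "\<dots> < card (line_graph_edges E')"
    proof (rule psubset_card_mono[OF fin])
      show "G ` line_graph_edges E \<subset> line_graph_edges E'" using sub new notin by blast
    qed
    finally show ?thesis .
  qed
  obtain V'' :: "nat set" and E'' where nn: "simple_graph V'' E''" "acyclic_graph V'' E''" "no_isolated V'' E''"
    "card E'' = card E'" "max_degree V'' E'' = max_degree V' E'"
    "card (line_graph_edges E'') = card (line_graph_edges E')"
    using to_nat[OF sg' ac' ni'] by blast
  define S where "S = {card (line_graph_edges E) | (V :: nat set) E.
      simple_graph V E \<and> acyclic_graph V E \<and> no_isolated V E \<and>
      card E = N \<and> max_degree V E = \<Delta>}"
  have "S \<subseteq> {..2^N}"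
  proof
    fix y assume "y \<in> S"
    then obtain E0 :: "nat set set" where y: "y = card (line_graph_edges E0)" "card E0 = N" unfolding S_def by blast
    have "card E0 > 0" using y(2) assms(1,2) by simp
    then have "finite E0" by (rule card_ge_0_finite)
    moreover have "line_graph_edges E0 \<subseteq> Pow E0" unfolding line_graph_edges_def by auto
    ultimately have "y \<le> card (Pow E0)" unfolding y by (simp add: card_mono)
    then show "y \<in> {..2^N}" using y(2) \<open>finite E0\<close> by (simp add: card_Pow)
  qed
  then have fS: "finite S" by (rule finite_subset) simp
  have "card (line_graph_edges E'') \<in> S" unfolding S_def using nn cE' md' by blast
  then have "card (line_graph_edges E'') \<le> g N \<Delta>" unfolding g_def S_def[symmetric] using fS by simp
  then show False using nn(6) lt assms(8) by simp
qed

end
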